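(* Let $k\ge2$ and let $A\in\mathbf{GL}(n,\mathbb Z)$ satisfy $A\equiv I\bmod 2$ and $A^2\equiv I\bmod 2^{k+1}$. Then there exists $p\in\mathbf{GL}(n,\mathbb Z)$ such that $p^{-1}Ap$ is congruent modulo $2^k$ to a diagonal matrix with diagonal entries $\pm1$. Moreover, if $A=\begin{pmatrix}I_q&0\\ *&*\end{pmatrix}$ (block form with respect to $n=q+(n-q)$), then $p$ may be chosen of the form $\begin{pmatrix}I_q&0\\ *&*\end{pmatrix}$. *)

theory Defs
  imports "Jordan_Normal_Form.Matrix" "HOL-Number_Theory.Cong"
begin

definition mat_cong_mod :: "int \<Rightarrow> int mat \<Rightarrow> int mat \<Rightarrow> bool" where
  "mat_cong_mod m A B \<longleftrightarrow> dim_row A = dim_row B \<and> dim_col A = dim_col B \<and>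
     (\<forall>i<dim_row A. \<forall>j<dim_col A. [A $$ (i,j) = B $$ (i,j)] (mod m))"

definition top_identity_block :: "nat \<Rightarrow> int mat \<Rightarrow> bool" where
  "top_identity_block q A \<longleftrightarrow> q \<le> dim_row A \<and>
     (\<forall>i<q. \<forall>j<dim_col A. A $$ (i,j) = (if i = j then 1 else 0))"

definition sign_diagonal :: "int mat \<Rightarrow> bool" where
  "sign_diagonal D \<longleftrightarrow> diagonal_mat D \<and> (\<forall>i<dim_row D. D $$ (i,i) \<in> {1, -1})"

end

theory Submission
  imports Defs "HOL-Number_Theory.Cong"
begin

lemma mult_entry:
  assumes "A \<in> carrier_mat n k" "B \<in> carrier_mat k l" "i < n" "j < l"
  shows "(A * B) $$ (i, j) = (\<Sum>t<k. A $$ (i, t) * B $$ (t, j))"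
  using assms by (auto simp: index_mult_mat scalar_prod_def atLeast0LessThan intro!: sum.cong)

lemma dsum1[simp]: assumes "a < n" shows "(\<Sum>t<(n::nat). (if a = t then 1 else 0) * f t) = (f a :: 'a::semiring_1)"
proof -
  have "(\<Sum>t<n. (if a = t then 1 else 0) * f t) = (\<Sum>t<n. (if a = t then f t else 0))"
    by (rule sum.cong) auto
  also have "\<dots> = f a" using assms by (subst sum.delta') auto
  finally show ?thesis .
qed

lemma dsum2[simp]: assumes "b < n" shows "(\<Sum>t<(n::nat). f t * (if t = b then 1 else 0)) = (f b :: 'a::semiring_1)"
proof -
  have "(\<Sum>t<n. f t * (if t = b then 1 else 0)) = (\<Sum>t<n. (if t = b then f t else 0))"
    by (rule sum.cong) auto
  also have "\<dots> = f b" using assms by (subst sum.delta) auto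
  finally show ?thesis .
qed

definition elm :: "nat \<Rightarrow> (nat \<Rightarrow> int) \<Rightarrow> (nat \<Rightarrow> int) \<Rightarrow> int mat" where
  "elm n x y = mat n n (\<lambda>(a,b). (if a = b then 1 else 0) + x a * y b)"

lemma elm_carrier[simp]: "elm n x y \<in> carrier_mat n n"
  by (simp add: elm_def)

lemma elm_dim[simp]: "dim_row (elm n x y) = n" "dim_col (elm n x y) = n"
  by (simp_all add: elm_def)

lemma elm_index[simp]: "a < n \<Longrightarrow> b < n \<Longrightarrow> elm n x y $$ (a,b) = (if a = b then 1 else 0) + x a * y b"
  by (simp add: elm_def)

lemma elm_inv:
  assumes "(\<Sum>t<n. y t * x t) = 0"
  shows "elm n x y * elm n (\<lambda>a. - x a) y = 1\<^sub>m n"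
proof (rule eq_matI)
  fix a b assume ab: "a < dim_row (1\<^sub>m n)" "b < dim_col (1\<^sub>m n)"
  hence ab': "a < n" "b < n" by auto
  have "(elm n x y * elm n (\<lambda>a. - x a) y) $$ (a,b) =
     (\<Sum>t<n. ((if a = t then 1 else 0) + x a * y t) * ((if t = b then 1 else 0) - x t * y b))"
    using ab' by (simp add: mult_entry[of _ n n _ n] del: index_mult_mat(1))
  also have "\<dots> = (\<Sum>t<n. (if a = t then 1 else 0) * (if t = b then 1 else 0))
        - (\<Sum>t<n. (if a = t then 1 else 0) * (x t * y b))
        + (\<Sum>t<n. x a * y t * (if t = b then 1 else 0))
        - x a * y b * (\<Sum>t<n. y t * x t)"
    by (simp add: algebra_simps sum.distrib sum_subtractf sum_distrib_left)
  also have "\<dots> = (if a = b then 1 else 0)"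
    using ab' assms by (simp only: dsum1[OF ab'(1)] dsum2[OF ab'(2)])
  finally show "(elm n x y * elm n (\<lambda>a. - x a) y) $$ (a,b) = 1\<^sub>m n $$ (a,b)"
    using ab' by simp
qed auto

lemma elm_inv':
  assumes "(\<Sum>t<n. y t * x t) = 0"
  shows "elm n (\<lambda>a. - x a) y * elm n x y = 1\<^sub>m n"
  using elm_inv[where n=n and y=y and x="\<lambda>a. - x a"] assms by (simp add: sum_negf)

lemma mcI:
  assumes "A \<in> carrier_mat n n" "B \<in> carrier_mat n n"
    "\<And>i j. i < n \<Longrightarrow> j < n \<Longrightarrow> [A $$ (i,j) = B $$ (i,j)] (mod m)"
  shows "mat_cong_mod m A B"
  using assms unfolding mat_cong_mod_def by auto

lemma mcD:
  assumes "mat_cong_mod m A B" "A \<in> carrier_mat n n" "i < n" "j < n"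
  shows "[A $$ (i,j) = B $$ (i,j)] (mod m)"
  using assms unfolding mat_cong_mod_def by auto

lemma mc_mult:
  assumes "A \<in> carrier_mat n n" "A' \<in> carrier_mat n n" "B \<in> carrier_mat n n" "B' \<in> carrier_mat n n"
    "mat_cong_mod m A A'" "mat_cong_mod m B B'"
  shows "mat_cong_mod m (A * B) (A' * B')"
proof (rule mcI[of _ n])
  fix i j assume ij: "i < n" "j < n"
  show "[(A * B) $$ (i, j) = (A' * B') $$ (i, j)] (mod m)"
    using ij assms by (auto simp: mult_entry[of _ n n _ n] simp del: index_mult_mat(1) intro!: cong_sum cong_mult mcD[of m _ _ n])
qed (use assms in auto)

lemma mc_refl: "mat_cong_mod m A A"
  unfolding mat_cong_mod_def by auto

lemma row_id:
  fixes Y M :: "int mat"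
  assumes "Y \<in> carrier_mat n n" "M \<in> carrier_mat n k" "i < n" "l < k"
    "\<forall>b<n. Y $$ (i,b) = (if i = b then 1 else 0)"
  shows "(Y * M) $$ (i,l) = M $$ (i,l)"
proof -
  have "(Y * M) $$ (i,l) = (\<Sum>t<n. (if i = t then 1 else 0) * M $$ (t,l))"
    using assms by (simp add: mult_entry[of _ n n _ k] del: index_mult_mat(1))
  also have "\<dots> = M $$ (i,l)" using assms(3) by (rule dsum1)
  finally show ?thesis .
qed

lemma col_id:
  fixes X M :: "int mat"
  assumes "X \<in> carrier_mat n n" "M \<in> carrier_mat k n" "i < n" "l < k"
    "\<forall>b<n. X $$ (b,i) = (if b = i then 1 else 0)"
  shows "(M * X) $$ (l,i) = M $$ (l,i)"
proof -
  have "(M * X) $$ (l,i) = (\<Sum>t<n. M $$ (l,t) * (if t = i then 1 else 0))"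
    using assms by (simp add: mult_entry[of _ k n _ n] del: index_mult_mat(1))
  also have "\<dots> = M $$ (l,i)" using assms(3) by (rule dsum2)
  finally show ?thesis .
qed

lemma row_cong:
  assumes "M \<in> carrier_mat k n" "N \<in> carrier_mat k n" "X \<in> carrier_mat n p" "i < k" "l < p"
    "\<forall>b<n. [M $$ (i,b) = N $$ (i,b)] (mod m)"
  shows "[(M * X) $$ (i,l) = (N * X) $$ (i,l)] (mod m)"
  using assms by (auto simp: mult_entry[of _ k n _ p] simp del: index_mult_mat(1) intro!: cong_sum cong_mult)

lemma col_cong:
  assumes "M \<in> carrier_mat n p" "N \<in> carrier_mat n p" "Y \<in> carrier_mat k n" "a < k" "j < p"
    "\<forall>b<n. [M $$ (b,j) = N $$ (b,j)] (mod m)"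
  shows "[(Y * M) $$ (a,j) = (Y * N) $$ (a,j)] (mod m)"
  using assms by (auto simp: mult_entry[of _ k n _ p] simp del: index_mult_mat(1) intro!: cong_sum cong_mult)

lemma row_cong':
  fixes H X :: "int mat"
  assumes "H \<in> carrier_mat n n" "X \<in> carrier_mat n n" "i < n" "l < n"
    "\<forall>b<n. [H $$ (i,b) = (if i = b then h else 0)] (mod m)"
  shows "[(H * X) $$ (i,l) = h * X $$ (i,l)] (mod m)"
proof -
  have "[(H * X) $$ (i,l) = (\<Sum>t<n. (if i = t then 1 else 0) * (h * X $$ (t,l)))] (mod m)"
  proof -
    have "[(\<Sum>t<n. H $$ (i,t) * X $$ (t,l)) = (\<Sum>t<n. (if i = t then 1 else 0) * (h * X $$ (t,l)))] (mod m)"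
    proof (rule cong_sum)
      fix t assume "t \<in> {..<n}"
      hence "[H $$ (i,t) = (if i = t then h else 0)] (mod m)" using assms by auto
      from cong_scalar_right[OF this, of "X $$ (t,l)"]
      show "[H $$ (i,t) * X $$ (t,l) = (if i = t then 1 else 0) * (h * X $$ (t,l))] (mod m)"
        by (auto split: if_splits)
    qed
    thus ?thesis using assms by (simp add: mult_entry[of _ n n _ n] del: index_mult_mat(1))
  qed
  thus ?thesis using dsum1[OF assms(3), of "\<lambda>t. h * X $$ (t,l)"] by simp
qed

lemma col_cong':
  fixes X M :: "int mat"
  assumes "X \<in> carrier_mat n n" "M \<in> carrier_mat n n" "i < n" "l < n"
    "\<forall>b<n. [X $$ (b,i) = (if b = i then h else 0)] (mod m)"
  shows "[(M * X) $$ (l,i) = M $$ (l,i) * h] (mod m)"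
proof -
  have "[(M * X) $$ (l,i) = (\<Sum>t<n. (M $$ (l,t) * h) * (if t = i then 1 else 0))] (mod m)"
  proof -
    have "[(\<Sum>t<n. M $$ (l,t) * X $$ (t,i)) = (\<Sum>t<n. (M $$ (l,t) * h) * (if t = i then 1 else 0))] (mod m)"
    proof (rule cong_sum)
      fix t assume "t \<in> {..<n}"
      hence "[X $$ (t,i) = (if t = i then h else 0)] (mod m)" using assms by auto
      from cong_scalar_left[OF this, of "M $$ (l,t)"]
      show "[M $$ (l,t) * X $$ (t,i) = (M $$ (l,t) * h) * (if t = i then 1 else 0)] (mod m)"
        by (auto split: if_splits)
    qed
    thus ?thesis using assms by (simp add: mult_entry[of _ n n _ n] del: index_mult_mat(1))
  qed
  thus ?thesis using dsum2[OF assms(3), of "\<lambda>t. M $$ (l,t) * h"] by simp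
qed

definition blk :: "int \<Rightarrow> nat \<Rightarrow> (nat \<Rightarrow> int) \<Rightarrow> int mat \<Rightarrow> bool" where
  "blk m j d G \<longleftrightarrow> (\<forall>i<j. \<forall>l<dim_row G. [G $$ (i,l) = (if i = l then d i else 0)] (mod m)
      \<and> [G $$ (l,i) = (if l = i then d i else 0)] (mod m))"

definition offq :: "int \<Rightarrow> nat \<Rightarrow> int mat \<Rightarrow> bool" where
  "offq m q G \<longleftrightarrow> (\<forall>i<q. \<forall>l<dim_row G. i \<noteq> l \<longrightarrow> [G $$ (i,l) = 0] (mod m))"

lemma blk_conj:
  fixes G X Y :: "int mat"
  assumes carr: "G \<in> carrier_mat n n" "X \<in> carrier_mat n n" "Y \<in> carrier_mat n n"
    and b: "blk m j d G" and jn: "j \<le> n"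
    and rowY: "\<forall>i<j. \<forall>b<n. Y $$ (i,b) = (if i = b then 1 else 0)"
    and rowX: "\<forall>i<j. \<forall>b<n. X $$ (i,b) = (if i = b then 1 else 0)"
    and colX: "\<forall>i<j. \<forall>b<n. X $$ (b,i) = (if b = i then 1 else 0)"
    and colY: "\<forall>i<j. \<forall>b<n. Y $$ (b,i) = (if b = i then 1 else 0)"
  shows "blk m j d (Y * G * X)"
  unfolding blk_def
proof (intro allI impI conjI)
  fix i l assume i: "i < j" and l: "l < dim_row (Y * G * X)"
  hence l': "l < n" and i': "i < n" using carr jn by auto
  have bG: "\<forall>l<n. [G $$ (i,l) = (if i = l then d i else 0)] (mod m) \<and> [G $$ (l,i) = (if l = i then d i else 0)] (mod m)"
    using b i carr unfolding blk_def by auto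
  have "\<forall>b<n. [(Y * G) $$ (i,b) = (if i = b then d i else 0)] (mod m)"
    using row_id[OF carr(3) carr(1) i'] rowY i bG by auto
  from row_cong'[OF mult_carrier_mat[OF carr(3) carr(1)] carr(2) i' l' this]
  have "[(Y * G * X) $$ (i,l) = d i * X $$ (i,l)] (mod m)" using carr by auto
  thus "[(Y * G * X) $$ (i,l) = (if i = l then d i else 0)] (mod m)"
    using rowX i l' by auto
  have "\<forall>b<n. [(G * X) $$ (b,i) = (if b = i then d i else 0)] (mod m)"
    using col_id[OF carr(2) carr(1) i'] colX i bG by auto
  from col_cong'[OF mult_carrier_mat[OF carr(1) carr(2)] carr(3) i' l' this]
  have "[(Y * (G * X)) $$ (l,i) = Y $$ (l,i) * d i] (mod m)" using carr by auto
  moreover have "Y * G * X = Y * (G * X)" using carr by (simp add: assoc_mult_mat[of _ n n _ n _ n])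
  ultimately show "[(Y * G * X) $$ (l,i) = (if l = i then d i else 0)] (mod m)"
    using colY i l' by auto
qed

lemma offq_conj:
  fixes G X Y :: "int mat"
  assumes carr: "G \<in> carrier_mat n n" "X \<in> carrier_mat n n" "Y \<in> carrier_mat n n"
    and b: "offq m q G" and qn: "q \<le> n"
    and rowY: "\<forall>i<q. \<forall>b<n. Y $$ (i,b) = (if i = b then 1 else 0)"
    and rowX: "\<forall>i<q. \<forall>b<n. X $$ (i,b) = (if i = b then 1 else 0)"
  shows "offq m q (Y * G * X)"
  unfolding offq_def
proof (intro allI impI)
  fix i l assume i: "i < q" and l: "l < dim_row (Y * G * X)" and il: "i \<noteq> l"
  hence l': "l < n" and i': "i < n" using carr qn by auto
  have "\<forall>b<n. [(Y * G) $$ (i,b) = (if i = b then G $$ (i,i) else 0)] (mod m)"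
    using row_id[OF carr(3) carr(1) i'] rowY i b carr unfolding offq_def by auto
  from row_cong'[OF mult_carrier_mat[OF carr(3) carr(1)] carr(2) i' l' this]
  have "[(Y * G * X) $$ (i,l) = G $$ (i,i) * X $$ (i,l)] (mod m)" using carr by auto
  thus "[(Y * G * X) $$ (i,l) = 0] (mod m)"
    using rowX i l' il by auto
qed

lemma conj_idem:
  fixes G X Y :: "int mat"
  assumes carr: "G \<in> carrier_mat n n" "X \<in> carrier_mat n n" "Y \<in> carrier_mat n n"
    and XY: "X * Y = 1\<^sub>m n" and idem: "mat_cong_mod m (G * G) G"
  shows "mat_cong_mod m ((Y * G * X) * (Y * G * X)) (Y * G * X)"
proof -
  have "(Y * G * X) * (Y * G * X) = (Y * G) * ((X * Y) * (G * X))"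
    using carr by (simp add: assoc_mult_mat[of _ n n _ n _ n])
  also have "\<dots> = (Y * (G * G)) * X"
    using carr by (simp add: XY assoc_mult_mat[of _ n n _ n _ n])
  finally have eq: "(Y * G * X) * (Y * G * X) = (Y * (G * G)) * X" .
  have "mat_cong_mod m (Y * (G * G)) (Y * G)"
    using mc_mult[of Y n Y "G*G" G m] carr mc_refl idem by auto
  hence "mat_cong_mod m ((Y * (G * G)) * X) ((Y * G) * X)"
    using mc_mult[of "Y*(G*G)" n "Y*G" X X m] carr mc_refl by auto
  thus ?thesis using eq by simp
qed

lemma halfA:
  fixes H :: "int mat"
  assumes H: "H \<in> carrier_mat n n" and idem: "mat_cong_mod m (H * H) H"
    and b: "blk m j d H" and oq: "offq m q H" and jn: "j < n" and qn: "q \<le> n"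
    and u: "[u * H $$ (j,j) = 1] (mod m)"
  shows "\<exists>P Pi. P \<in> carrier_mat n n \<and> Pi \<in> carrier_mat n n \<and> P * Pi = 1\<^sub>m n \<and> Pi * P = 1\<^sub>m n
     \<and> (\<forall>i<q. \<forall>b<n. P $$ (i,b) = (if i = b then 1 else 0) \<and> Pi $$ (i,b) = (if i = b then 1 else 0))
     \<and> mat_cong_mod m ((Pi * H * P) * (Pi * H * P)) (Pi * H * P)
     \<and> blk m j d (Pi * H * P) \<and> offq m q (Pi * H * P)
     \<and> (\<forall>a<n. [(Pi * H * P) $$ (a,j) = (if a = j then 1 else 0)] (mod m))"
proof -
  define c where "c a = (if j < a then (u * H $$ (a,j)) mod m else 0)" for a
  define e where "e a = (if a = j then 1 else (0::int))" for a
  define P where "P = elm n c e"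
  define Pi where "Pi = elm n (\<lambda>a. - c a) e"
  have sum0: "(\<Sum>t<n. e t * c t) = 0"
    by (rule sum.neutral) (auto simp: e_def c_def)
  have PPi: "P * Pi = 1\<^sub>m n" unfolding P_def Pi_def by (rule elm_inv[OF sum0])
  have PiP: "Pi * P = 1\<^sub>m n" unfolding P_def Pi_def by (rule elm_inv'[OF sum0])
  have carr: "P \<in> carrier_mat n n" "Pi \<in> carrier_mat n n" unfolding P_def Pi_def by auto
  have c0: "c i = 0" if "i \<le> j \<or> i < q" "i < n" for i
  proof (cases "j < i")
    case True
    with that have "i < q" by auto
    with oq True that H have "[H $$ (i,j) = 0] (mod m)" unfolding offq_def by auto
    hence "m dvd H $$ (i,j)" by (simp add: cong_0_iff)
    hence "m dvd u * H $$ (i,j)" by simp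
    thus ?thesis using True by (simp add: c_def)
  qed (simp add: c_def)
  have Pent: "P $$ (a,b) = (if a = b then 1 else 0) + c a * e b" "Pi $$ (a,b) = (if a = b then 1 else 0) - c a * e b"
    if "a < n" "b < n" for a b using that by (simp_all add: P_def Pi_def)
  have rowq: "\<forall>i<q. \<forall>b<n. P $$ (i,b) = (if i = b then 1 else 0) \<and> Pi $$ (i,b) = (if i = b then 1 else 0)"
    using c0 qn by (auto simp: Pent)
  have rowj: "\<forall>i<j. \<forall>b<n. P $$ (i,b) = (if i = b then 1 else 0) \<and> Pi $$ (i,b) = (if i = b then 1 else 0)"
    using c0 jn by (auto simp: Pent)
  have colj: "\<forall>i<j. \<forall>b<n. P $$ (b,i) = (if b = i then 1 else 0) \<and> Pi $$ (b,i) = (if b = i then 1 else 0)"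
    using jn by (auto simp: Pent e_def)
  have idem': "mat_cong_mod m ((Pi * H * P) * (Pi * H * P)) (Pi * H * P)"
    by (rule conj_idem[OF H carr(1) carr(2) PPi idem])
  have blk': "blk m j d (Pi * H * P)"
    by (rule blk_conj[OF H carr(1) carr(2) b]) (use jn rowj colj in auto)
  have oq': "offq m q (Pi * H * P)"
    by (rule offq_conj[OF H carr(1) carr(2) oq qn]) (use rowq in auto)
  have s1: "\<forall>b<n. [P $$ (b,j) = (u \<cdot>\<^sub>m H) $$ (b,j)] (mod m)"
  proof (intro allI impI)
    fix b assume bn: "b < n"
    consider "b = j" | "b < j" | "j < b" by linarith
    thus "[P $$ (b,j) = (u \<cdot>\<^sub>m H) $$ (b,j)] (mod m)"
    proof cases
      case 1
      then show ?thesis using bn jn H u c0[of j] by (simp add: Pent e_def cong_sym mult.commute)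
    next
      case 2
      have "[H $$ (b,j) = (if b = j then d b else 0)] (mod m)" using b 2 jn H unfolding blk_def by (metis carrier_matD(1))
      hence "[H $$ (b,j) = 0] (mod m)" using 2 by simp
      hence "[u * H $$ (b,j) = u * 0] (mod m)" by (rule cong_scalar_left)
      then show ?thesis using 2 bn jn H c0[of b] by (simp add: Pent e_def cong_sym)
    next
      case 3
      then show ?thesis using bn jn H by (simp add: Pent e_def c_def)
    qed
  qed
  have s2: "\<forall>t<n. [(H * P) $$ (t,j) = P $$ (t,j)] (mod m)"
  proof (intro allI impI)
    fix t assume tn: "t < n"
    have "[(H * P) $$ (t,j) = (H * (u \<cdot>\<^sub>m H)) $$ (t,j)] (mod m)"
      by (rule col_cong[OF carr(1) _ H tn jn s1]) (use H in auto)
    also have "(H * (u \<cdot>\<^sub>m H)) $$ (t,j) = u * (H * H) $$ (t,j)"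
      using H tn jn by (simp add: mult_smult_distrib[of _ n n _ n])
    also have "[u * (H * H) $$ (t,j) = u * H $$ (t,j)] (mod m)"
      by (rule cong_scalar_left, rule mcD[OF idem _ tn jn]) (use H in auto)
    also have "[u * H $$ (t,j) = P $$ (t,j)] (mod m)"
      using s1 tn jn H by (auto simp: cong_sym)
    finally show "[(H * P) $$ (t,j) = P $$ (t,j)] (mod m)" .
  qed
  have s3: "\<forall>a<n. [(Pi * H * P) $$ (a,j) = (if a = j then 1 else 0)] (mod m)"
  proof (intro allI impI)
    fix a assume an: "a < n"
    have "Pi * H * P = Pi * (H * P)" using carr H by (simp add: assoc_mult_mat[of _ n n _ n _ n])
    moreover have "[(Pi * (H * P)) $$ (a,j) = (Pi * P) $$ (a,j)] (mod m)"
      by (rule col_cong[OF _ carr(1) carr(2) an jn s2]) (use H carr in auto)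
    ultimately show "[(Pi * H * P) $$ (a,j) = (if a = j then 1 else 0)] (mod m)"
      using PiP an jn by simp
  qed
  show ?thesis using carr PPi PiP rowq idem' blk' oq' s3 by blast
qed

lemma halfB:
  fixes H :: "int mat"
  assumes H: "H \<in> carrier_mat n n" and idem: "mat_cong_mod m (H * H) H"
    and b: "blk m j d H" and oq: "offq m q H" and jn: "j < n" and qn: "q \<le> n"
    and cj: "\<forall>a<n. [H $$ (a,j) = (if a = j then 1 else 0)] (mod m)"
  shows "\<exists>Q Qi. Q \<in> carrier_mat n n \<and> Qi \<in> carrier_mat n n \<and> Q * Qi = 1\<^sub>m n \<and> Qi * Q = 1\<^sub>m n
     \<and> (\<forall>i<q. \<forall>b<n. Q $$ (i,b) = (if i = b then 1 else 0) \<and> Qi $$ (i,b) = (if i = b then 1 else 0))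
     \<and> mat_cong_mod m ((Qi * H * Q) * (Qi * H * Q)) (Qi * H * Q)
     \<and> blk m (Suc j) (d(j := 1)) (Qi * H * Q) \<and> offq m q (Qi * H * Q)"
proof -
  define s where "s b = (if j < b then (- H $$ (j,b)) mod m else 0)" for b
  define e where "e a = (if a = j then 1 else (0::int))" for a
  define Q where "Q = elm n e s"
  define Qi where "Qi = elm n (\<lambda>a. - e a) s"
  have sum0: "(\<Sum>t<n. s t * e t) = 0"
    by (rule sum.neutral) (auto simp: e_def s_def)
  have QQi: "Q * Qi = 1\<^sub>m n" unfolding Q_def Qi_def by (rule elm_inv[OF sum0])
  have QiQ: "Qi * Q = 1\<^sub>m n" unfolding Q_def Qi_def by (rule elm_inv'[OF sum0])
  have carr: "Q \<in> carrier_mat n n" "Qi \<in> carrier_mat n n" unfolding Q_def Qi_def by auto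
  have s0: "s b = 0" if "b \<le> j \<or> j < q" "b < n" for b
  proof (cases "j < b")
    case True
    with that have "j < q" by auto
    with oq True that H have "[H $$ (j,b) = 0] (mod m)" unfolding offq_def by auto
    hence "m dvd H $$ (j,b)" by (simp add: cong_0_iff)
    hence "m dvd - H $$ (j,b)" by simp
    thus ?thesis using True by (simp add: s_def)
  qed (simp add: s_def)
  have Qent: "Q $$ (a,b) = (if a = b then 1 else 0) + e a * s b" "Qi $$ (a,b) = (if a = b then 1 else 0) - e a * s b"
    if "a < n" "b < n" for a b using that by (simp_all add: Q_def Qi_def)
  have rowq: "\<forall>i<q. \<forall>b<n. Q $$ (i,b) = (if i = b then 1 else 0) \<and> Qi $$ (i,b) = (if i = b then 1 else 0)"
    using s0 qn by (auto simp: Qent e_def)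
  have rowj: "\<forall>i<j. \<forall>b<n. Q $$ (i,b) = (if i = b then 1 else 0) \<and> Qi $$ (i,b) = (if i = b then 1 else 0)"
    using jn by (auto simp: Qent e_def)
  have colj: "\<forall>i<j. \<forall>b<n. Q $$ (b,i) = (if b = i then 1 else 0) \<and> Qi $$ (b,i) = (if b = i then 1 else 0)"
    using jn s0 by (auto simp: Qent)
  have idem': "mat_cong_mod m ((Qi * H * Q) * (Qi * H * Q)) (Qi * H * Q)"
    by (rule conj_idem[OF H carr(1) carr(2) QQi idem])
  have blk': "blk m j d (Qi * H * Q)"
    by (rule blk_conj[OF H carr(1) carr(2) b]) (use jn rowj colj in auto)
  have oq': "offq m q (Qi * H * Q)"
    by (rule offq_conj[OF H carr(1) carr(2) oq qn]) (use rowq in auto)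
  have assoc: "Qi * H * Q = Qi * (H * Q)" using carr H by (simp add: assoc_mult_mat[of _ n n _ n _ n])
  have colJ: "\<forall>a<n. [(Qi * H * Q) $$ (a,j) = (if a = j then 1 else 0)] (mod m)"
  proof (intro allI impI)
    fix a assume an: "a < n"
    have c1: "\<forall>b<n. [(H * Q) $$ (b,j) = (1\<^sub>m n) $$ (b,j)] (mod m)"
    proof (intro allI impI)
      fix b assume bn: "b < n"
      have "(H * Q) $$ (b,j) = H $$ (b,j)"
        by (rule col_id[OF carr(1) H jn bn]) (use s0 jn in \<open>auto simp: Qent\<close>)
      thus "[(H * Q) $$ (b,j) = (1\<^sub>m n) $$ (b,j)] (mod m)" using cj bn jn by simp
    qed
    have "[(Qi * (H * Q)) $$ (a,j) = (Qi * 1\<^sub>m n) $$ (a,j)] (mod m)"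
      by (rule col_cong[OF _ _ carr(2) an jn c1]) (use H carr in auto)
    thus "[(Qi * H * Q) $$ (a,j) = (if a = j then 1 else 0)] (mod m)"
      using assoc carr an jn s0[of j] by (simp add: Qent)
  qed
  have r1: "\<forall>b<n. [Qi $$ (j,b) = H $$ (j,b)] (mod m)"
  proof (intro allI impI)
    fix b assume bn: "b < n"
    consider "b = j" | "b < j" | "j < b" by linarith
    thus "[Qi $$ (j,b) = H $$ (j,b)] (mod m)"
    proof cases
      case 1
      have "[H $$ (j,j) = 1] (mod m)" using cj jn by auto
      then show ?thesis using 1 bn jn s0[of j] by (simp add: Qent e_def cong_sym)
    next
      case 2
      have "[H $$ (j,b) = (if j = b then d b else 0)] (mod m)" using b 2 jn H unfolding blk_def by (metis carrier_matD(1))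
      hence "[H $$ (j,b) = 0] (mod m)" using 2 by simp
      then show ?thesis using 2 bn jn s0[of b] by (simp add: Qent e_def cong_sym)
    next
      case 3
      have "[(- H $$ (j,b)) mod m = - H $$ (j,b)] (mod m)" by simp
      hence "[- ((- H $$ (j,b)) mod m) = - (- H $$ (j,b))] (mod m)" by (rule cong_uminus)
      then show ?thesis using 3 bn jn by (simp add: Qent e_def s_def)
    qed
  qed
  have r2: "\<forall>t<n. [(Qi * H) $$ (j,t) = Qi $$ (j,t)] (mod m)"
  proof (intro allI impI)
    fix t assume tn: "t < n"
    have "[(Qi * H) $$ (j,t) = (H * H) $$ (j,t)] (mod m)"
      by (rule row_cong[OF carr(2) H H jn tn r1])
    also have "[(H * H) $$ (j,t) = H $$ (j,t)] (mod m)"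
      by (rule mcD[OF idem _ jn tn]) (use H in auto)
    also have "[H $$ (j,t) = Qi $$ (j,t)] (mod m)" using r1 tn by (simp add: cong_sym)
    finally show "[(Qi * H) $$ (j,t) = Qi $$ (j,t)] (mod m)" .
  qed
  have rowJ: "\<forall>l<n. [(Qi * H * Q) $$ (j,l) = (if j = l then 1 else 0)] (mod m)"
  proof (intro allI impI)
    fix l assume ln: "l < n"
    have "[(Qi * H * Q) $$ (j,l) = (Qi * Q) $$ (j,l)] (mod m)"
      by (rule row_cong[OF _ carr(2) carr(1) jn ln r2]) (use H carr in auto)
    thus "[(Qi * H * Q) $$ (j,l) = (if j = l then 1 else 0)] (mod m)"
      using QiQ jn ln by simp
  qed
  have blk'': "blk m (Suc j) (d(j := 1)) (Qi * H * Q)"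
    unfolding blk_def
  proof (intro allI impI)
    fix i l assume i: "i < Suc j" and l: "l < dim_row (Qi * H * Q)"
    hence ln: "l < n" using carr by auto
    show "[(Qi * H * Q) $$ (i,l) = (if i = l then (d(j := 1)) i else 0)] (mod m) \<and>
          [(Qi * H * Q) $$ (l,i) = (if l = i then (d(j := 1)) i else 0)] (mod m)"
    proof (cases "i = j")
      case True
      then show ?thesis using rowJ colJ ln by auto
    next
      case False
      hence "i < j" using i by auto
      have "[(Qi*H*Q)$$(i,l) = (if i = l then d i else 0)] (mod m) \<and> [(Qi*H*Q)$$(l,i) = (if l = i then d i else 0)] (mod m)"
        using blk' \<open>i < j\<close> l unfolding blk_def by blast
      then show ?thesis using False by (cases "l = i") auto
    qed
  qed
  show ?thesis using carr QQi QiQ rowq idem' blk'' oq' by blast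
qed

lemma rows_prod:
  fixes X Y :: "int mat"
  assumes "X \<in> carrier_mat n n" "Y \<in> carrier_mat n n" "q \<le> n"
    "\<forall>i<q. \<forall>b<n. X $$ (i,b) = (if i = b then 1 else 0)"
    "\<forall>i<q. \<forall>b<n. Y $$ (i,b) = (if i = b then 1 else 0)"
  shows "\<forall>i<q. \<forall>b<n. (X * Y) $$ (i,b) = (if i = b then 1 else 0)"
proof (intro allI impI)
  fix i b assume i: "i < q" and b: "b < n"
  have "(X * Y) $$ (i,b) = Y $$ (i,b)"
    by (rule row_id[OF assms(1) assms(2)]) (use assms i b in auto)
  thus "(X * Y) $$ (i,b) = (if i = b then 1 else 0)" using assms i b by auto
qed

lemma core:
  fixes H :: "int mat"
  assumes H: "H \<in> carrier_mat n n" and idem: "mat_cong_mod m (H * H) H"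
    and b: "blk m j d H" and oq: "offq m q H" and jn: "j < n" and qn: "q \<le> n"
    and u: "[u * H $$ (j,j) = 1] (mod m)"
  shows "\<exists>R Ri. R \<in> carrier_mat n n \<and> Ri \<in> carrier_mat n n \<and> R * Ri = 1\<^sub>m n \<and> Ri * R = 1\<^sub>m n
     \<and> (\<forall>i<q. \<forall>b<n. R $$ (i,b) = (if i = b then 1 else 0) \<and> Ri $$ (i,b) = (if i = b then 1 else 0))
     \<and> mat_cong_mod m ((Ri * H * R) * (Ri * H * R)) (Ri * H * R)
     \<and> blk m (Suc j) (d(j := 1)) (Ri * H * R) \<and> offq m q (Ri * H * R)"
proof -
  obtain P Pi where P: "P \<in> carrier_mat n n" "Pi \<in> carrier_mat n n" "P * Pi = 1\<^sub>m n" "Pi * P = 1\<^sub>m n"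
     "\<forall>i<q. \<forall>b<n. P $$ (i,b) = (if i = b then 1 else 0) \<and> Pi $$ (i,b) = (if i = b then 1 else 0)"
     "mat_cong_mod m ((Pi * H * P) * (Pi * H * P)) (Pi * H * P)"
     "blk m j d (Pi * H * P)" "offq m q (Pi * H * P)"
     "\<forall>a<n. [(Pi * H * P) $$ (a,j) = (if a = j then 1 else 0)] (mod m)"
    using halfA[OF H idem b oq jn qn u] by blast
  have H1: "Pi * H * P \<in> carrier_mat n n" using P H by auto
  obtain Q Qi where Q: "Q \<in> carrier_mat n n" "Qi \<in> carrier_mat n n" "Q * Qi = 1\<^sub>m n" "Qi * Q = 1\<^sub>m n"
     "\<forall>i<q. \<forall>b<n. Q $$ (i,b) = (if i = b then 1 else 0) \<and> Qi $$ (i,b) = (if i = b then 1 else 0)"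
     "mat_cong_mod m ((Qi * (Pi * H * P) * Q) * (Qi * (Pi * H * P) * Q)) (Qi * (Pi * H * P) * Q)"
     "blk m (Suc j) (d(j := 1)) (Qi * (Pi * H * P) * Q)" "offq m q (Qi * (Pi * H * P) * Q)"
    using halfB[OF H1 P(6) P(7) P(8) jn qn P(9)] by blast
  have eq: "(Qi * Pi) * H * (P * Q) = Qi * (Pi * H * P) * Q"
    using P Q H by (simp add: assoc_mult_mat[of _ n n _ n _ n])
  have inv1: "(P * Q) * (Qi * Pi) = 1\<^sub>m n"
  proof -
    have "(P * Q) * (Qi * Pi) = P * (Q * (Qi * Pi))" using P Q by (metis assoc_mult_mat mult_carrier_mat)
    also have "Q * (Qi * Pi) = (Q * Qi) * Pi" using P Q by (metis assoc_mult_mat mult_carrier_mat)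
    finally show ?thesis using P Q by simp
  qed
  have inv2: "(Qi * Pi) * (P * Q) = 1\<^sub>m n"
  proof -
    have "(Qi * Pi) * (P * Q) = Qi * (Pi * (P * Q))" using P Q by (metis assoc_mult_mat mult_carrier_mat)
    also have "Pi * (P * Q) = (Pi * P) * Q" using P Q by (metis assoc_mult_mat mult_carrier_mat)
    finally show ?thesis using P Q by simp
  qed
  have r1: "\<forall>i<q. \<forall>b<n. (P * Q) $$ (i,b) = (if i = b then 1 else 0)"
    by (rule rows_prod[OF P(1) Q(1) qn]) (use P Q in auto)
  have r2: "\<forall>i<q. \<forall>b<n. (Qi * Pi) $$ (i,b) = (if i = b then 1 else 0)"
    by (rule rows_prod[OF Q(2) P(2) qn]) (use P Q in auto)
  show ?thesis
    apply (rule exI[of _ "P * Q"], rule exI[of _ "Qi * Pi"])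
    using P Q eq inv1 inv2 r1 r2 by auto
qed

lemma sq_entry:
  fixes G :: "int mat"
  assumes G: "G \<in> carrier_mat n n" and i: "i < n" and l: "l < n"
  shows "((1\<^sub>m n + a \<cdot>\<^sub>m G) * (1\<^sub>m n + a \<cdot>\<^sub>m G)) $$ (i,l)
     = (if i = l then 1 else 0) + 2 * a * G $$ (i,l) + a * a * (G * G) $$ (i,l)"
proof -
  have "((1\<^sub>m n + a \<cdot>\<^sub>m G) * (1\<^sub>m n + a \<cdot>\<^sub>m G)) $$ (i,l)
     = (\<Sum>t<n. ((if i = t then 1 else 0) + a * G $$ (i,t)) * ((if t = l then 1 else 0) + a * G $$ (t,l)))"
    using G i l by (simp add: mult_entry[of _ n n _ n] del: index_mult_mat(1))
  also have "\<dots> = (\<Sum>t<n. (if i = t then 1 else 0) * (if t = l then 1 else 0))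
        + (\<Sum>t<n. (if i = t then 1 else 0) * (a * G $$ (t,l)))
        + (\<Sum>t<n. a * G $$ (i,t) * (if t = l then 1 else 0))
        + a * a * (\<Sum>t<n. G $$ (i,t) * G $$ (t,l))"
    by (simp add: algebra_simps sum.distrib sum_distrib_left)
  also have "\<dots> = (if i = l then 1 else 0) + a * G $$ (i,l) + a * G $$ (i,l) + a * a * (\<Sum>t<n. G $$ (i,t) * G $$ (t,l))"
    by (simp only: dsum1[OF i] dsum2[OF l])
  also have "(\<Sum>t<n. G $$ (i,t) * G $$ (t,l)) = (G * G) $$ (i,l)"
    using G i l by (simp add: mult_entry[of _ n n _ n] del: index_mult_mat(1))
  finally show ?thesis by simp
qed

lemma affine_conj:
  fixes G X Y :: "int mat"
  assumes carr: "G \<in> carrier_mat n n" "X \<in> carrier_mat n n" "Y \<in> carrier_mat n n"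
    and YX: "Y * X = 1\<^sub>m n"
  shows "Y * (1\<^sub>m n + a \<cdot>\<^sub>m G) * X = 1\<^sub>m n + a \<cdot>\<^sub>m (Y * G * X)"
proof -
  have "Y * (1\<^sub>m n + a \<cdot>\<^sub>m G) = Y + a \<cdot>\<^sub>m (Y * G)"
    using carr by (simp add: mult_add_distrib_mat[OF carr(3) one_carrier_mat smult_carrier_mat[OF carr(1)]] mult_smult_distrib[of _ n n])
  moreover have "(Y + a \<cdot>\<^sub>m (Y * G)) * X = Y * X + a \<cdot>\<^sub>m (Y * G * X)"
    using carr by (simp add: add_mult_distrib_mat[OF carr(3) smult_carrier_mat[OF mult_carrier_mat[OF carr(3) carr(1)]] carr(2)] mult_smult_assoc_mat[of _ n n])
  ultimately show ?thesis using YX by simp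
qed

lemma blk_compl:
  fixes X :: "int mat"
  assumes X: "X \<in> carrier_mat n n" and b: "blk m J e X" and Jn: "J \<le> n"
  shows "blk m J (\<lambda>i. 1 - e i) (1\<^sub>m n + (-1) \<cdot>\<^sub>m X)"
  unfolding blk_def
proof (intro allI impI)
  fix i l assume i: "i < J" and l: "l < dim_row (1\<^sub>m n + (-1) \<cdot>\<^sub>m X)"
  hence ln: "l < n" using X by auto
  have h: "[X $$ (i,l) = (if i = l then e i else 0)] (mod m) \<and> [X $$ (l,i) = (if l = i then e i else 0)] (mod m)"
    using b i ln X unfolding blk_def by (metis carrier_matD(1))
  show "[(1\<^sub>m n + (-1) \<cdot>\<^sub>m X) $$ (i,l) = (if i = l then 1 - e i else 0)] (mod m) \<and>
        [(1\<^sub>m n + (-1) \<cdot>\<^sub>m X) $$ (l,i) = (if l = i then 1 - e i else 0)] (mod m)"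
  proof -
    have True: "i < n" using i Jn by simp
    have "[(if i = l then 1 else 0) - X $$ (i,l) = (if i = l then 1 else 0) - (if i = l then e i else 0)] (mod m)"
      using h by (intro cong_diff cong_refl) auto
    moreover have "[(if l = i then 1 else 0) - X $$ (l,i) = (if l = i then 1 else 0) - (if l = i then e i else 0)] (mod m)"
      using h by (intro cong_diff cong_refl) auto
    ultimately show ?thesis using True ln X by (auto split: if_splits)
  qed
qed

lemma offq_compl:
  fixes X :: "int mat"
  assumes X: "X \<in> carrier_mat n n" and b: "offq m q X" and qn: "q \<le> n"
  shows "offq m q (1\<^sub>m n + (-1) \<cdot>\<^sub>m X)"
  unfolding offq_def
proof (intro allI impI)
  fix i l assume i: "i < q" and l: "l < dim_row (1\<^sub>m n + (-1) \<cdot>\<^sub>m X)" and il: "i \<noteq> l"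
  hence ln: "l < n" and "i < n" using X qn by auto
  have "[X $$ (i,l) = 0] (mod m)" using b i ln il X unfolding offq_def by (metis carrier_matD(1))
  hence "[- X $$ (i,l) = - 0] (mod m)" by (rule cong_uminus)
  thus "[(1\<^sub>m n + (-1) \<cdot>\<^sub>m X) $$ (i,l) = 0] (mod m)" using ln \<open>i < n\<close> il X by simp
qed

lemma blk_cong:
  assumes "blk m J e X" "\<forall>i<J. e i = e' i"
  shows "blk m J e' X"
  unfolding blk_def
proof (intro allI impI)
  fix i l assume "i < J" "l < dim_row X"
  hence "[X $$ (i,l) = (if i = l then e i else 0)] (mod m) \<and> [X $$ (l,i) = (if l = i then e i else 0)] (mod m)"
    "e i = e' i" using assms unfolding blk_def by auto
  thus "[X $$ (i,l) = (if i = l then e' i else 0)] (mod m) \<and> [X $$ (l,i) = (if l = i then e' i else 0)] (mod m)"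
    by (cases "l = i") auto
qed

lemma compl_compl:
  fixes X :: "int mat"
  assumes "X \<in> carrier_mat n n"
  shows "1\<^sub>m n + (-1) \<cdot>\<^sub>m (1\<^sub>m n + (-1) \<cdot>\<^sub>m X) = X"
  by (rule eq_matI) (use assms in auto)

lemma step:
  fixes G :: "int mat"
  assumes G: "G \<in> carrier_mat n n" and idem: "mat_cong_mod m (G * G) G"
    and b: "blk m j d G" and oq: "offq m q G" and jn: "j < n" and qn: "q \<le> n"
    and inv: "\<forall>x. (\<exists>u. [u * x = 1] (mod m)) \<or> (\<exists>u. [u * (1 - x) = 1] (mod m))"
    and dd: "\<forall>i. d i \<in> {0,1}"
  shows "\<exists>R Ri d'. R \<in> carrier_mat n n \<and> Ri \<in> carrier_mat n n \<and> R * Ri = 1\<^sub>m n \<and> Ri * R = 1\<^sub>m n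
     \<and> (\<forall>i<q. \<forall>b<n. R $$ (i,b) = (if i = b then 1 else 0) \<and> Ri $$ (i,b) = (if i = b then 1 else 0))
     \<and> mat_cong_mod m ((Ri * G * R) * (Ri * G * R)) (Ri * G * R)
     \<and> blk m (Suc j) d' (Ri * G * R) \<and> offq m q (Ri * G * R) \<and> (\<forall>i. d' i \<in> {0,1})"
proof -
  from inv have "(\<exists>u. [u * G $$ (j,j) = 1] (mod m)) \<or> (\<exists>u. [u * (1 - G $$ (j,j)) = 1] (mod m))" by blast
  thus ?thesis
  proof
    assume "\<exists>u. [u * G $$ (j,j) = 1] (mod m)"
    then obtain u where u: "[u * G $$ (j,j) = 1] (mod m)" by blast
    from core[OF G idem b oq jn qn u] obtain R Ri where RR: "R \<in> carrier_mat n n \<and> Ri \<in> carrier_mat n n \<and> R * Ri = 1\<^sub>m n \<and> Ri * R = 1\<^sub>m n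
     \<and> (\<forall>i<q. \<forall>b<n. R $$ (i,b) = (if i = b then 1 else 0) \<and> Ri $$ (i,b) = (if i = b then 1 else 0))
     \<and> mat_cong_mod m ((Ri * G * R) * (Ri * G * R)) (Ri * G * R)
     \<and> blk m (Suc j) (d(j := 1)) (Ri * G * R) \<and> offq m q (Ri * G * R)" by blast
    have "\<forall>i. (d(j := 1)) i \<in> {0,1}" using dd by auto
    thus ?thesis using RR by blast
  next
    assume "\<exists>u. [u * (1 - G $$ (j,j)) = 1] (mod m)"
    then obtain u where u0: "[u * (1 - G $$ (j,j)) = 1] (mod m)" by blast
    define H where "H = 1\<^sub>m n + (-1) \<cdot>\<^sub>m G"
    have H: "H \<in> carrier_mat n n" using G by (simp add: H_def)
    have u: "[u * H $$ (j,j) = 1] (mod m)" using u0 jn G by (simp add: H_def)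
    have idemH: "mat_cong_mod m (H * H) H"
    proof (rule mcI[of _ n])
      fix i l assume i: "i < n" and l: "l < n"
      have "(H * H) $$ (i,l) = (if i = l then 1 else 0) + 2 * (-1) * G $$ (i,l) + (-1) * (-1) * (G * G) $$ (i,l)"
        unfolding H_def by (rule sq_entry[OF G i l])
      also have "[\<dots> = (if i = l then 1 else 0) + 2 * (-1) * G $$ (i,l) + (-1) * (-1) * G $$ (i,l)] (mod m)"
        by (intro cong_add cong_refl cong_scalar_left mcD[OF idem _ i l]) (use G in auto)
      also have "(if i = l then 1 else 0) + 2 * (-1) * G $$ (i,l) + (-1) * (-1) * G $$ (i,l) = H $$ (i,l)"
        using i l G by (simp add: H_def)
      finally show "[(H * H) $$ (i,l) = H $$ (i,l)] (mod m)" .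
    qed (use H in auto)
    have bH: "blk m j (\<lambda>i. 1 - d i) H" unfolding H_def by (rule blk_compl[OF G b]) (use jn in auto)
    have oH: "offq m q H" unfolding H_def by (rule offq_compl[OF G oq qn])
    from core[OF H idemH bH oH jn qn u] obtain R Ri where RR: "R \<in> carrier_mat n n" "Ri \<in> carrier_mat n n" "R * Ri = 1\<^sub>m n" "Ri * R = 1\<^sub>m n"
     "\<forall>i<q. \<forall>b<n. R $$ (i,b) = (if i = b then 1 else 0) \<and> Ri $$ (i,b) = (if i = b then 1 else 0)"
     "blk m (Suc j) ((\<lambda>i. 1 - d i)(j := 1)) (Ri * H * R)" by blast
    have eqH: "Ri * H * R = 1\<^sub>m n + (-1) \<cdot>\<^sub>m (Ri * G * R)"
      unfolding H_def by (rule affine_conj[OF G RR(1) RR(2) RR(4)])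
    have G': "Ri * G * R \<in> carrier_mat n n" using RR G by auto
    have "blk m (Suc j) (\<lambda>i. 1 - ((\<lambda>i. 1 - d i)(j := 1)) i) (1\<^sub>m n + (-1) \<cdot>\<^sub>m (Ri * H * R))"
      by (rule blk_compl[OF _ RR(6)]) (use RR H jn in auto)
    hence "blk m (Suc j) (\<lambda>i. 1 - ((\<lambda>i. 1 - d i)(j := 1)) i) (Ri * G * R)"
      unfolding eqH compl_compl[OF G'] .
    hence blkG: "blk m (Suc j) (d(j := 0)) (Ri * G * R)"
      by (rule blk_cong) auto
    have idemG: "mat_cong_mod m ((Ri * G * R) * (Ri * G * R)) (Ri * G * R)"
      by (rule conj_idem[OF G RR(1) RR(2) RR(3) idem])
    have oG: "offq m q (Ri * G * R)"
      by (rule offq_conj[OF G RR(1) RR(2) oq qn]) (use RR(5) in auto)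
    have "\<forall>i. (d(j := 0)) i \<in> {0,1}" using dd by auto
    thus ?thesis using RR blkG idemG oG by blast
  qed
qed

lemma main:
  fixes G :: "int mat"
  assumes G: "G \<in> carrier_mat n n" and idem: "mat_cong_mod m (G * G) G"
    and oq: "offq m q G" and qn: "q \<le> n"
    and inv: "\<forall>x. (\<exists>u. [u * x = 1] (mod m)) \<or> (\<exists>u. [u * (1 - x) = 1] (mod m))"
  shows "j \<le> n \<Longrightarrow> \<exists>R Ri d. R \<in> carrier_mat n n \<and> Ri \<in> carrier_mat n n \<and> R * Ri = 1\<^sub>m n \<and> Ri * R = 1\<^sub>m n
     \<and> (\<forall>i<q. \<forall>b<n. R $$ (i,b) = (if i = b then 1 else 0) \<and> Ri $$ (i,b) = (if i = b then 1 else 0))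
     \<and> mat_cong_mod m ((Ri * G * R) * (Ri * G * R)) (Ri * G * R)
     \<and> blk m j d (Ri * G * R) \<and> offq m q (Ri * G * R) \<and> (\<forall>i. d i \<in> {0,1})"
proof (induction j)
  case 0
  have "blk m 0 (\<lambda>_. 0) G" unfolding blk_def by auto
  moreover have "1\<^sub>m n * G * 1\<^sub>m n = G" using G by simp
  ultimately show ?case
    apply (intro exI[of _ "1\<^sub>m n"] exI[of _ "\<lambda>_. 0"])
    using G idem oq qn by auto
next
  case (Suc j)
  then obtain R Ri d where RR: "R \<in> carrier_mat n n" "Ri \<in> carrier_mat n n" "R * Ri = 1\<^sub>m n" "Ri * R = 1\<^sub>m n"
     "\<forall>i<q. \<forall>b<n. R $$ (i,b) = (if i = b then 1 else 0) \<and> Ri $$ (i,b) = (if i = b then 1 else 0)"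
     "mat_cong_mod m ((Ri * G * R) * (Ri * G * R)) (Ri * G * R)"
     "blk m j d (Ri * G * R)" "offq m q (Ri * G * R)" "\<forall>i. d i \<in> {0,1}" by auto
  have G0: "Ri * G * R \<in> carrier_mat n n" using RR G by auto
  have jn: "j < n" using Suc by auto
  from step[OF G0 RR(6) RR(7) RR(8) jn qn inv RR(9)] obtain R' Ri' d' where RR': "R' \<in> carrier_mat n n" "Ri' \<in> carrier_mat n n" "R' * Ri' = 1\<^sub>m n" "Ri' * R' = 1\<^sub>m n"
     "\<forall>i<q. \<forall>b<n. R' $$ (i,b) = (if i = b then 1 else 0) \<and> Ri' $$ (i,b) = (if i = b then 1 else 0)"
     "mat_cong_mod m ((Ri' * (Ri * G * R) * R') * (Ri' * (Ri * G * R) * R')) (Ri' * (Ri * G * R) * R')"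
     "blk m (Suc j) d' (Ri' * (Ri * G * R) * R')" "offq m q (Ri' * (Ri * G * R) * R')" "\<forall>i. d' i \<in> {0,1}"
    by blast
  have eq: "(Ri' * Ri) * G * (R * R') = Ri' * (Ri * G * R) * R'"
    using RR RR' G by (simp add: assoc_mult_mat[of _ n n _ n _ n])
  have inv1: "(R * R') * (Ri' * Ri) = 1\<^sub>m n"
  proof -
    have "(R * R') * (Ri' * Ri) = R * (R' * (Ri' * Ri))" using RR RR' by (metis assoc_mult_mat mult_carrier_mat)
    also have "R' * (Ri' * Ri) = (R' * Ri') * Ri" using RR RR' by (metis assoc_mult_mat mult_carrier_mat)
    finally show ?thesis using RR RR' by simp
  qed
  have inv2: "(Ri' * Ri) * (R * R') = 1\<^sub>m n"
  proof -
    have "(Ri' * Ri) * (R * R') = Ri' * (Ri * (R * R'))" using RR RR' by (metis assoc_mult_mat mult_carrier_mat)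
    also have "Ri * (R * R') = (Ri * R) * R'" using RR RR' by (metis assoc_mult_mat mult_carrier_mat)
    finally show ?thesis using RR RR' by simp
  qed
  have r1: "\<forall>i<q. \<forall>b<n. (R * R') $$ (i,b) = (if i = b then 1 else 0)"
    by (rule rows_prod[OF RR(1) RR'(1) qn]) (use RR RR' in auto)
  have r2: "\<forall>i<q. \<forall>b<n. (Ri' * Ri) $$ (i,b) = (if i = b then 1 else 0)"
    by (rule rows_prod[OF RR'(2) RR(2) qn]) (use RR RR' in auto)
  show ?case
    apply (rule exI[of _ "R * R'"], rule exI[of _ "Ri' * Ri"], rule exI[of _ d'])
    using RR RR' eq inv1 inv2 r1 r2 by auto
qed

lemma cong_mult_modulus:
  fixes a b c m :: int
  assumes "[a = b] (mod m)"
  shows "[c * a = c * b] (mod c * m)"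
  using assms by (simp add: cong_iff_dvd_diff right_diff_distrib[symmetric] mult_dvd_mono)

lemma inv_pow2:
  fixes x :: int
  shows "(\<exists>u. [u * x = 1] (mod 2 ^ j)) \<or> (\<exists>u. [u * (1 - x) = 1] (mod 2 ^ j))"
proof (cases "odd x")
  case True
  hence "coprime x (2 ^ j)" by simp
  from cong_solve_coprime_int[OF this] obtain u where "[x * u = 1] (mod 2 ^ j)" by blast
  thus ?thesis by (auto simp: mult.commute)
next
  case False
  hence "odd (1 - x)" by simp
  hence "coprime (1 - x) (2 ^ j)" by simp
  from cong_solve_coprime_int[OF this] obtain u where "[(1 - x) * u = 1] (mod 2 ^ j)" by blast
  thus ?thesis by (auto simp: mult.commute)
qed

theorem lemma10p2:
  fixes A :: "int mat" and n k :: nat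
  assumes "k \<ge> 2"
    and "A \<in> carrier_mat n n" and "invertible_mat A"
    and "mat_cong_mod 2 A (1\<^sub>m n)"
    and "mat_cong_mod (2 ^ (k + 1)) (A * A) (1\<^sub>m n)"
  shows "(\<exists>P Pinv D. P \<in> carrier_mat n n \<and> Pinv \<in> carrier_mat n n \<and>
            P * Pinv = 1\<^sub>m n \<and> Pinv * P = 1\<^sub>m n \<and>
            D \<in> carrier_mat n n \<and> sign_diagonal D \<and>
            mat_cong_mod (2 ^ k) (Pinv * A * P) D)
       \<and> (\<forall>q\<le>n. top_identity_block q A \<longrightarrow>
            (\<exists>P Pinv D. P \<in> carrier_mat n n \<and> Pinv \<in> carrier_mat n n \<and>
              P * Pinv = 1\<^sub>m n \<and> Pinv * P = 1\<^sub>m n \<and>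
              top_identity_block q P \<and>
              D \<in> carrier_mat n n \<and> sign_diagonal D \<and>
              mat_cong_mod (2 ^ k) (Pinv * A * P) D))"
proof -
  note k = assms(1) and A = assms(2)
  define m :: int where "m = 2 ^ (k - 1)"
  define E where "E = mat n n (\<lambda>(i,l). ((if i = l then 1 else 0) - A $$ (i,l)) div 2)"
  have E: "E \<in> carrier_mat n n" by (simp add: E_def)
  have Aeq: "A = 1\<^sub>m n + (-2) \<cdot>\<^sub>m E"
  proof (rule eq_matI)
    fix i l assume "i < dim_row (1\<^sub>m n + (-2) \<cdot>\<^sub>m E)" "l < dim_col (1\<^sub>m n + (-2) \<cdot>\<^sub>m E)"
    hence il: "i < n" "l < n" using E by auto
    have "[A $$ (i,l) = (if i = l then 1 else 0)] (mod 2)"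
      using mcD[OF assms(4) A il] il by simp
    hence "2 dvd ((if i = l then 1 else 0) - A $$ (i,l))"
      by (simp add: cong_iff_dvd_diff dvd_diff_commute)
    hence "(-2) * (((if i = l then 1 else 0) - A $$ (i,l)) div 2) = A $$ (i,l) - (if i = l then 1 else 0)"
      by (metis dvd_mult_div_cancel mult_minus_left minus_diff_eq)
    thus "A $$ (i,l) = (1\<^sub>m n + (-2) \<cdot>\<^sub>m E) $$ (i,l)"
      using il by (simp add: E_def)
  qed (use A E in auto)
  have pow: "(2::int) ^ (k + 1) = 4 * m" "(2::int) ^ k = 2 * m"
  proof -
    have kk: "k + 1 = (k - 1) + 2" "k = Suc (k - 1)" using k by auto
    have "(2::int) ^ (k + 1) = 2 ^ (k - 1) * 2 ^ 2" by (subst kk(1), rule power_add)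
    thus "(2::int) ^ (k + 1) = 4 * m" by (simp add: m_def)
    have "(2::int) ^ k = 2 * 2 ^ (k - 1)" by (subst kk(2), rule power_Suc)
    thus "(2::int) ^ k = 2 * m" by (simp add: m_def)
  qed
  have idemE: "mat_cong_mod m (E * E) E"
  proof (rule mcI[of _ n])
    fix i l assume i: "i < n" and l: "l < n"
    have "(A * A) $$ (i,l) = (if i = l then 1 else 0) + 2 * (-2) * E $$ (i,l) + (-2) * (-2) * (E * E) $$ (i,l)"
      unfolding Aeq by (rule sq_entry[OF E i l])
    moreover have "[(A * A) $$ (i,l) = (if i = l then 1 else 0)] (mod 4 * m)"
      using mcD[OF assms(5) _ i l] A i l pow by auto
    ultimately have eqAA: "(A * A) $$ (i,l) - (if i = l then 1 else 0) = 4 * ((E * E) $$ (i,l) - E $$ (i,l))"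
      and dv: "4 * m dvd (A * A) $$ (i,l) - (if i = l then 1 else 0)"
      by (simp_all add: cong_iff_dvd_diff algebra_simps)
    from dv have "4 * m dvd 4 * ((E * E) $$ (i,l) - E $$ (i,l))" unfolding eqAA .
    hence "m dvd (E * E) $$ (i,l) - E $$ (i,l)" by (subst (asm) dvd_times_left_cancel_iff) simp_all
    thus "[(E * E) $$ (i,l) = E $$ (i,l)] (mod m)"
      by (simp add: cong_iff_dvd_diff)
  qed (use E in auto)
  have inv: "\<forall>x. (\<exists>u. [u * x = 1] (mod m)) \<or> (\<exists>u. [u * (1 - x) = 1] (mod m))"
    unfolding m_def using inv_pow2 by blast
  have key: "\<exists>P Pinv D. P \<in> carrier_mat n n \<and> Pinv \<in> carrier_mat n n \<and>
              P * Pinv = 1\<^sub>m n \<and> Pinv * P = 1\<^sub>m n \<and>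
              top_identity_block q P \<and>
              D \<in> carrier_mat n n \<and> sign_diagonal D \<and>
              mat_cong_mod (2 ^ k) (Pinv * A * P) D"
    if qn: "q \<le> n" and oq: "offq m q E" for q
  proof -
    obtain R Ri d where RR: "R \<in> carrier_mat n n" "Ri \<in> carrier_mat n n" "R * Ri = 1\<^sub>m n" "Ri * R = 1\<^sub>m n"
       "\<forall>i<q. \<forall>b<n. R $$ (i,b) = (if i = b then 1 else 0) \<and> Ri $$ (i,b) = (if i = b then 1 else 0)"
       "blk m n d (Ri * E * R)" "\<forall>i. d i \<in> {0,1}"
      using main[OF E idemE oq qn inv, of n] by blast
    define D where "D = mat n n (\<lambda>(i,l). if i = l then 1 - 2 * d i else (0::int))"
    have D: "D \<in> carrier_mat n n" by (simp add: D_def)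
    have sd: "sign_diagonal D"
      unfolding sign_diagonal_def diagonal_mat_def using RR(7) by (auto simp: D_def)
    have top: "top_identity_block q R"
      unfolding top_identity_block_def using RR(1,5) qn by auto
    have eqA: "Ri * A * R = 1\<^sub>m n + (-2) \<cdot>\<^sub>m (Ri * E * R)"
      unfolding Aeq by (rule affine_conj[OF E RR(1) RR(2) RR(4)])
    have cg: "mat_cong_mod (2 ^ k) (Ri * A * R) D"
    proof (rule mcI[of _ n])
      fix i l assume i: "i < n" and l: "l < n"
      have "[(Ri * E * R) $$ (i,l) = (if i = l then d i else 0)] (mod m)"
        using RR(6) i l RR(1,2) E unfolding blk_def by auto
      hence "[(-2) * (Ri * E * R) $$ (i,l) = (-2) * (if i = l then d i else 0)] (mod (-2) * m)"
        by (rule cong_mult_modulus)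
      hence "[(-2) * (Ri * E * R) $$ (i,l) = (-2) * (if i = l then d i else 0)] (mod 2 ^ k)"
        using pow by simp
      hence "[(if i = l then 1 else 0) + (-2) * (Ri * E * R) $$ (i,l) = (if i = l then 1 else 0) + (-2) * (if i = l then d i else 0)] (mod 2 ^ k)"
        by (rule cong_add[OF cong_refl])
      thus "[(Ri * A * R) $$ (i,l) = D $$ (i,l)] (mod 2 ^ k)"
        using i l RR E unfolding eqA by (auto simp: D_def)
    qed (use RR A D in auto)
    show ?thesis using RR D sd top cg by blast
  qed
  have part1: "\<exists>P Pinv D. P \<in> carrier_mat n n \<and> Pinv \<in> carrier_mat n n \<and>
            P * Pinv = 1\<^sub>m n \<and> Pinv * P = 1\<^sub>m n \<and>
            D \<in> carrier_mat n n \<and> sign_diagonal D \<and>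
            mat_cong_mod (2 ^ k) (Pinv * A * P) D"
    using key[of 0] unfolding offq_def by auto
  have part2: "\<exists>P Pinv D. P \<in> carrier_mat n n \<and> Pinv \<in> carrier_mat n n \<and>
              P * Pinv = 1\<^sub>m n \<and> Pinv * P = 1\<^sub>m n \<and>
              top_identity_block q P \<and>
              D \<in> carrier_mat n n \<and> sign_diagonal D \<and>
              mat_cong_mod (2 ^ k) (Pinv * A * P) D"
    if qn: "q \<le> n" and tb: "top_identity_block q A" for q
  proof (rule key[OF qn])
    show "offq m q E" unfolding offq_def
    proof (intro allI impI)
      fix i l assume i: "i < q" and l: "l < dim_row E" and il: "i \<noteq> l"
      have "A $$ (i,l) = 0" using tb i l il A E unfolding top_identity_block_def by auto
      thus "[E $$ (i,l) = 0] (mod m)" using i l il qn E by (simp add: E_def)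
    qed
  qed
  show ?thesis using part1 part2 by blast
qed

end
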